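(* Assume $A_n$ satisfies (C1) and (C2), and let $(\beta,B)\in\Theta$. Then $$\limsup_{n\to\infty}\frac1n\,\mathbb E_{n,\beta,B}\Big[\sum_{i=1}^n\Big(m_i(\mathbf X)-\sum_{j=1}^nA_n(i,j)\tanh(\beta m_j(\mathbf X)+B)\Big)\Big]^2<\infty.$$
   Context: For each $n$, $A_n$ is a known symmetric $n\times n$ matrix with non-negative entries and zero diagonal. The Ising model is $\mathbb P_{n,\beta,B}(\mathbf X=\mathbf x)=Z_n(\beta,B)^{-1}\exp(\frac{\beta}{2}\mathbf x^\top A_n\mathbf x+B\sum_i x_i)$ on $\{-1,1\}^n$, with expectation $\mathbb E_{n,\beta,B}$. (C1): there is a constant $\gamma<\infty$ with $\max_{i}\sum_{j}A_n(i,j)\le\gamma$ for all $n$; (C2): $\liminf_n\frac1n\sum_{i,j}A_n(i,j)>0$. $\Theta=\{(\beta,B):\beta>0,B\ne0\}$. $m_i(\mathbf x)=\sum_jA_n(i,j)x_j$. *)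

theory Defs
  imports "HOL-Analysis.Analysis"
begin

text \<open>Matrices are given as a sequence A :: nat => nat => nat => real,
  where A n i j is the (i,j) entry of A_n, indices i, j in {0..<n}.\<close>

definition spin_configs :: "nat \<Rightarrow> (nat \<Rightarrow> real) set" where
  "spin_configs n = PiE {..<n} (\<lambda>_. {-1, 1})"

definition local_field :: "(nat \<Rightarrow> nat \<Rightarrow> nat \<Rightarrow> real) \<Rightarrow> nat \<Rightarrow> (nat \<Rightarrow> real) \<Rightarrow> nat \<Rightarrow> real" where
  "local_field A n x i = (\<Sum>j<n. A n i j * x j)"

definition ising_weight :: "(nat \<Rightarrow> nat \<Rightarrow> nat \<Rightarrow> real) \<Rightarrow> real \<Rightarrow> real \<Rightarrow> nat \<Rightarrow> (nat \<Rightarrow> real) \<Rightarrow> real" where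
  "ising_weight A \<beta> B n x =
     exp (\<beta> / 2 * (\<Sum>i<n. \<Sum>j<n. x i * A n i j * x j) + B * (\<Sum>i<n. x i))"

definition ising_Z :: "(nat \<Rightarrow> nat \<Rightarrow> nat \<Rightarrow> real) \<Rightarrow> real \<Rightarrow> real \<Rightarrow> nat \<Rightarrow> real" where
  "ising_Z A \<beta> B n = (\<Sum>x\<in>spin_configs n. ising_weight A \<beta> B n x)"

definition ising_expect :: "(nat \<Rightarrow> nat \<Rightarrow> nat \<Rightarrow> real) \<Rightarrow> real \<Rightarrow> real \<Rightarrow> nat \<Rightarrow> ((nat \<Rightarrow> real) \<Rightarrow> real) \<Rightarrow> real" where
  "ising_expect A \<beta> B n f =
     (\<Sum>x\<in>spin_configs n. f x * ising_weight A \<beta> B n x) / ising_Z A \<beta> B n"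

end

theory Submission imports Defs begin

definition flipj :: "nat \<Rightarrow> (nat \<Rightarrow> real) \<Rightarrow> (nat \<Rightarrow> real)" where
  "flipj j x = x(j := - x j)"

lemma upd_sum:
  fixes c :: "nat \<Rightarrow> real"
  assumes "j < n"
  shows "(\<Sum>k<n. c k * (x(j:=v)) k) = (\<Sum>k<n. c k * x k) + c j * (v - x j)"
proof -
  have "(\<Sum>k<n. c k * (x(j:=v)) k) = (\<Sum>k<n. c k * x k + (if k = j then c j * (v - x j) else 0))"
    by (rule sum.cong) (auto simp: algebra_simps)
  also have "\<dots> = (\<Sum>k<n. c k * x k) + c j * (v - x j)"
    using assms by (simp add: sum.distrib)
  finally show ?thesis .
qed

lemma upd_sum':
  fixes c :: "nat \<Rightarrow> real"
  assumes "j < n"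
  shows "(\<Sum>k<n. (x(j:=v)) k * c k) = (\<Sum>k<n. x k * c k) + c j * (v - x j)"
  using upd_sum[OF assms, of c x v] by (simp add: mult.commute)

lemma flip_mem:
  assumes "j < n" "x \<in> spin_configs n" shows "flipj j x \<in> spin_configs n"
  using assms unfolding spin_configs_def flipj_def by (auto simp: PiE_iff extensional_def)

lemma flip_flip: "flipj j (flipj j x) = x"
  unfolding flipj_def by auto

lemma spin_val: assumes "j < n" "x \<in> spin_configs n" shows "x j = 1 \<or> x j = -1"
  using assms unfolding spin_configs_def by (auto simp: PiE_iff)

lemma lf_upd:
  assumes "j < n" "A n j j = 0"
  shows "local_field A n (x(j:=v)) j = local_field A n x j"
  using upd_sum[OF assms(1), of "A n j" x v] assms unfolding local_field_def by simp

lemma lf_upd_gen: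
  assumes "j < n"
  shows "local_field A n (x(j:=v)) i = local_field A n x i + A n i j * (v - x j)"
  using upd_sum[OF assms(1), of "A n i" x v] assms unfolding local_field_def by simp

lemma quad_upd:
  assumes "j < n" and sym: "\<And>i k. i < n \<Longrightarrow> k < n \<Longrightarrow> A n i k = A n k i"
    and diag: "A n j j = 0"
  shows "(\<Sum>i<n. \<Sum>k<n. (x(j:=v)) i * A n i k * (x(j:=v)) k)
       = (\<Sum>i<n. \<Sum>k<n. x i * A n i k * x k) + 2 * (v - x j) * local_field A n x j"
proof -
  let ?y = "x(j:=v)"
  have r: "\<And>z. (\<Sum>i<n. \<Sum>k<n. z i * A n i k * z k) = (\<Sum>i<n. z i * local_field A n z i)"
    unfolding local_field_def by (simp add: sum_distrib_left mult.assoc)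
  have "(\<Sum>i<n. ?y i * local_field A n ?y i)
      = (\<Sum>i<n. ?y i * local_field A n x i + ?y i * A n i j * (v - x j))"
    by (rule sum.cong[OF refl], subst lf_upd_gen[OF assms(1)]) (simp add: algebra_simps)
  also have "\<dots> = (\<Sum>i<n. ?y i * local_field A n x i) + (\<Sum>i<n. ?y i * A n i j) * (v - x j)"
    by (simp add: sum.distrib sum_distrib_right)
  also have "(\<Sum>i<n. ?y i * local_field A n x i) = (\<Sum>i<n. x i * local_field A n x i) + local_field A n x j * (v - x j)"
    by (rule upd_sum'[OF assms(1)])
  also have "(\<Sum>i<n. ?y i * A n i j) = (\<Sum>i<n. x i * A n i j) + A n j j * (v - x j)"
    by (rule upd_sum'[OF assms(1)])
  also have "(\<Sum>i<n. x i * A n i j) = local_field A n x j"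
    unfolding local_field_def using sym assms(1) by (auto intro!: sum.cong simp: mult.commute)
  finally have "(\<Sum>i<n. ?y i * local_field A n ?y i) = (\<Sum>i<n. x i * local_field A n x i) + 2*(v - x j)*local_field A n x j"
    using diag by (simp add: algebra_simps del: fun_upd_apply)
  then show ?thesis by (simp only: r)
qed

lemma weight_flip:
  assumes "j < n" and sym: "\<And>i k. i < n \<Longrightarrow> k < n \<Longrightarrow> A n i k = A n k i"
    and diag: "A n j j = 0"
  shows "ising_weight A \<beta> B n (flipj j x)
     = ising_weight A \<beta> B n x * exp (-2 * x j * (\<beta> * local_field A n x j + B))"
proof -
  have q: "(\<Sum>i<n. \<Sum>k<n. (flipj j x) i * A n i k * (flipj j x) k)
       = (\<Sum>i<n. \<Sum>k<n. x i * A n i k * x k) - 4 * x j * local_field A n x j"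
    unfolding flipj_def using quad_upd[of j n A x "- x j", OF assms] by simp
  have l: "(\<Sum>i<n. flipj j x i) = (\<Sum>i<n. x i) - 2 * x j"
    unfolding flipj_def using upd_sum'[OF assms(1), of x "- x j" "\<lambda>_. 1"] by simp
  show ?thesis unfolding ising_weight_def q l
    by (simp add: exp_add[symmetric] algebra_simps)
qed

lemma tanh_lip_le:
  fixes a b :: real assumes "a \<le> b" shows "tanh b - tanh a \<le> b - a"
proof -
  have "(\<lambda>x. x - tanh x) a \<le> (\<lambda>x. x - tanh x) b"
    apply (rule DERIV_nonneg_imp_nondecreasing[OF assms])
    apply (rule exI[of _ "tanh _ ^ 2"])
    apply (auto intro!: derivative_eq_intros)
    done
  then show ?thesis by simp
qed

lemma tanh_lip: fixes a b :: real shows "\<bar>tanh a - tanh b\<bar> \<le> \<bar>a - b\<bar>"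
proof (cases "a \<le> b")
  case True
  then have "tanh a \<le> tanh b" by simp
  with tanh_lip_le[OF True] show ?thesis by simp
next
  case False
  then have "b \<le> a" by simp
  then have "tanh b \<le> tanh a" by simp
  with tanh_lip_le[OF \<open>b \<le> a\<close>] show ?thesis by simp
qed

lemma tanh_key:
  fixes h :: real
  shows "(1 - tanh h) + (-1 - tanh h) * exp (-2 * h) = 0"
proof -
  have "1 + exp (-2*h) > 0" by (smt (verit) exp_gt_zero)
  then show ?thesis unfolding tanh_real_altdef by (simp add: field_simps)
qed

lemma tanh_key2:
  fixes h :: real
  shows "(-1 - tanh h) + (1 - tanh h) * exp (2 * h) = 0"
  using tanh_key[of "-h"] by (simp add: algebra_simps)

lemma flip_zero:
  assumes "j < n" and sym: "\<And>i k. i < n \<Longrightarrow> k < n \<Longrightarrow> A n i k = A n k i"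
    and diag: "A n j j = 0"
    and g: "\<And>x. x \<in> spin_configs n \<Longrightarrow> g (flipj j x) = g x"
  shows "(\<Sum>x\<in>spin_configs n. (x j - tanh (\<beta> * local_field A n x j + B)) * g x * ising_weight A \<beta> B n x) = 0"
proof -
  let ?S = "spin_configs n"
  define F where "F x = (x j - tanh (\<beta> * local_field A n x j + B)) * g x * ising_weight A \<beta> B n x" for x
  have e: "sum F ?S = sum (\<lambda>x. F (flipj j x)) ?S"
    by (rule sum.reindex_bij_witness[of _ "flipj j" "flipj j"])
       (auto simp: flip_flip flip_mem[OF assms(1)])
  have z: "F x + F (flipj j x) = 0" if x: "x \<in> ?S" for x
  proof -
    let ?h = "\<beta> * local_field A n x j + B"
    have fj: "flipj j x j = - x j" unfolding flipj_def by simp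
    have lf: "local_field A n (flipj j x) j = local_field A n x j"
      unfolding flipj_def by (rule lf_upd[of j n A, OF assms(1) diag])
    have "F (flipj j x) = (- x j - tanh ?h) * g x * (ising_weight A \<beta> B n x * exp (-2 * x j * ?h))"
      using weight_flip[of j n A, OF assms(1) sym diag, of \<beta> B x] by (simp add: F_def fj lf g[OF x])
    then have "F x + F (flipj j x) = g x * ising_weight A \<beta> B n x *
        ((x j - tanh ?h) + (- x j - tanh ?h) * exp (-2 * x j * ?h))"
      unfolding F_def by (simp add: algebra_simps)
    also have "((x j - tanh ?h) + (- x j - tanh ?h) * exp (-2 * x j * ?h)) = 0"
    proof (cases "x j = 1")
      case True then show ?thesis using tanh_key[of ?h] by simp
    next
      case False then have "x j = -1" using spin_val[OF assms(1) x] by auto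
      then show ?thesis using tanh_key2[of ?h] by simp
    qed
    then have "g x * ising_weight A \<beta> B n x *
        ((x j - tanh ?h) + (- x j - tanh ?h) * exp (-2 * x j * ?h)) = 0" by simp
    finally show ?thesis .
  qed
  have "2 * sum F ?S = sum F ?S + sum (\<lambda>x. F (flipj j x)) ?S" using e by simp
  also have "\<dots> = (\<Sum>x\<in>?S. F x + F (flipj j x))" by (simp add: sum.distrib)
  also have "\<dots> = 0" using z by simp
  finally show ?thesis unfolding F_def by simp
qed

lemma main_bound:
  fixes A :: "nat \<Rightarrow> nat \<Rightarrow> nat \<Rightarrow> real" and \<beta> B \<gamma> :: real
  assumes sym: "\<And>i k. i < n \<Longrightarrow> k < n \<Longrightarrow> A n i k = A n k i"
    and nonneg: "\<And>i k. i < n \<Longrightarrow> k < n \<Longrightarrow> A n i k \<ge> 0"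
    and diag: "\<And>i. i < n \<Longrightarrow> A n i i = 0"
    and row: "\<And>i. i < n \<Longrightarrow> (\<Sum>j<n. A n i j) \<le> \<gamma>"
    and g0: "\<gamma> \<ge> 0" and b0: "\<beta> \<ge> 0"
  shows "ising_expect A \<beta> B n (\<lambda>x. (\<Sum>i<n. local_field A n x i
              - (\<Sum>j<n. A n i j * tanh (\<beta> * local_field A n x j + B))) ^ 2)
         \<le> real n * (2 * \<gamma> * (\<gamma> + \<beta> * \<gamma> * \<gamma>))"
proof -
  let ?S = "spin_configs n"
  define w where "w x = ising_weight A \<beta> B n x" for x
  define d where "d k = (\<Sum>i<n. A n i k)" for k
  define t where "t k x = tanh (\<beta> * local_field A n x k + B)" for k x
  define Q where "Q x = (\<Sum>k<n. d k * (x k - t k x))" for x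
  define K where "K = \<gamma> + \<beta> * \<gamma> * \<gamma>"
  have finS: "finite ?S" unfolding spin_configs_def by (auto intro: finite_PiE)
  have wpos: "w x > 0" for x unfolding w_def ising_weight_def by simp
  have "(\<lambda>i. if i < n then 1 else undefined) \<in> ?S"
    unfolding spin_configs_def by (auto simp: PiE_iff extensional_def)
  then have Sne: "?S \<noteq> {}" by blast
  have Zpos: "ising_Z A \<beta> B n > 0"
    unfolding ising_Z_def using finS Sne wpos unfolding w_def by (simp add: sum_pos)
  have dnn: "d k \<ge> 0" if "k < n" for k unfolding d_def using nonneg that by (intro sum_nonneg) auto
  have dle: "d k \<le> \<gamma>" if "k < n" for k
  proof -
    have "d k = (\<Sum>j<n. A n k j)" unfolding d_def using sym that by (auto intro!: sum.cong)
    then show ?thesis using row[OF that] by simp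
  qed
  have eqQ: "(\<Sum>i<n. local_field A n x i - (\<Sum>j<n. A n i j * tanh (\<beta> * local_field A n x j + B))) = Q x" for x
  proof -
    have a: "(\<Sum>i<n. local_field A n x i) = (\<Sum>k<n. d k * x k)"
      unfolding local_field_def d_def by (subst sum.swap) (simp add: sum_distrib_right)
    have b: "(\<Sum>i<n. \<Sum>j<n. A n i j * tanh (\<beta> * local_field A n x j + B)) = (\<Sum>k<n. d k * t k x)"
      unfolding t_def d_def by (subst sum.swap) (simp add: sum_distrib_right)
    show ?thesis unfolding Q_def sum_subtractf a b by (simp add: right_diff_distrib sum_subtractf)
  qed
  have zero: "(\<Sum>x\<in>?S. (x k - t k x) * Q (x(k:=0)) * w x) = 0" if k: "k < n" for k
  proof -
    have fl: "\<And>x. (flipj k x)(k:=0) = x(k:=0)" unfolding flipj_def by simp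
    show ?thesis unfolding t_def w_def
      by (rule flip_zero[of k n A, OF k sym diag[OF k]]) (simp_all add: fl)
  qed
  have Rb: "\<bar>Q x - Q (x(k:=0))\<bar> \<le> K" if k: "k < n" and x: "x \<in> ?S" for k x
  proof -
    let ?y = "x(k:=0)"
    have xk: "\<bar>x k\<bar> = 1" using spin_val[OF k x] by auto
    have "Q x - Q ?y = (\<Sum>l<n. d l * ((x l - ?y l) - (t l x - t l ?y)))"
      unfolding Q_def by (simp add: sum_subtractf[symmetric] algebra_simps del: fun_upd_apply)
    also have "\<bar>\<dots>\<bar> \<le> (\<Sum>l<n. \<bar>d l * ((x l - ?y l) - (t l x - t l ?y))\<bar>)" by (rule sum_abs)
    also have "\<dots> \<le> (\<Sum>l<n. (if l = k then d l else 0) + \<gamma> * (\<beta> * A n l k))"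
    proof (rule sum_mono)
      fix l assume l: "l \<in> {..<n}"
      have t1: "\<bar>x l - ?y l\<bar> = (if l = k then 1 else 0)" using xk by auto
      have "\<bar>t l x - t l ?y\<bar> \<le> \<bar>\<beta> * local_field A n x l - \<beta> * local_field A n ?y l\<bar>"
        unfolding t_def using tanh_lip by (smt (verit))
      also have "\<dots> = \<bar>\<beta> * (x k * A n l k)\<bar>"
      proof -
        have e: "local_field A n x l - local_field A n ?y l = x k * A n l k"
          using lf_upd_gen[OF k, of A x 0 l] by (simp add: algebra_simps del: fun_upd_apply)
        show ?thesis by (metis e right_diff_distrib)
      qed
      also have "\<dots> = \<beta> * A n l k"
        using xk nonneg[of l k] l k b0 by (simp add: abs_mult)
      finally have t2: "\<bar>t l x - t l ?y\<bar> \<le> \<beta> * A n l k" .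
      have "\<bar>d l * ((x l - ?y l) - (t l x - t l ?y))\<bar> \<le> d l * (\<bar>x l - ?y l\<bar> + \<bar>t l x - t l ?y\<bar>)"
        using dnn[of l] l by (simp add: abs_mult mult_left_mono abs_triangle_ineq4)
      also have "\<dots> \<le> d l * ((if l = k then 1 else 0) + \<beta> * A n l k)"
        using t1 t2 dnn[of l] l by (simp add: mult_left_mono)
      also have "\<dots> \<le> (if l = k then d l else 0) + \<gamma> * (\<beta> * A n l k)"
      proof -
        have "d l * (\<beta> * A n l k) \<le> \<gamma> * (\<beta> * A n l k)"
          using dle[of l] l nonneg[of l k] k b0 by (intro mult_right_mono) auto
        then show ?thesis by (cases "l = k") (simp_all add: distrib_left)
      qed
      finally show "\<bar>d l * ((x l - ?y l) - (t l x - t l ?y))\<bar> \<le> (if l = k then d l else 0) + \<gamma> * (\<beta> * A n l k)" .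
    qed
    also have "\<dots> = d k + \<gamma> * \<beta> * d k"
      using k by (simp add: sum.distrib d_def sum_distrib_left mult.assoc)
    also have "\<dots> \<le> K"
    proof -
      have "\<gamma> * \<beta> * d k \<le> \<gamma> * \<beta> * \<gamma>" using dle[OF k] g0 b0 by (intro mult_left_mono) auto
      then show ?thesis unfolding K_def using dle[OF k] by (simp add: algebra_simps)
    qed
    finally show ?thesis .
  qed
  have per_k: "(\<Sum>x\<in>?S. (x k - t k x) * Q x * w x) \<le> 2 * K * ising_Z A \<beta> B n" if k: "k < n" for k
  proof -
    have "(\<Sum>x\<in>?S. (x k - t k x) * Q x * w x)
        = (\<Sum>x\<in>?S. (x k - t k x) * Q x * w x) - (\<Sum>x\<in>?S. (x k - t k x) * Q (x(k:=0)) * w x)"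
      using zero[OF k] by simp
    also have "\<dots> = (\<Sum>x\<in>?S. (x k - t k x) * (Q x - Q (x(k:=0))) * w x)"
      by (simp add: sum_subtractf[symmetric] algebra_simps del: fun_upd_apply)
    also have "\<dots> \<le> (\<Sum>x\<in>?S. 2 * K * w x)"
    proof (rule sum_mono)
      fix x assume x: "x \<in> ?S"
      have a1: "\<bar>x k - t k x\<bar> \<le> 2"
        using spin_val[OF k x] tanh_real_bounds[of "\<beta> * local_field A n x k + B"]
        unfolding t_def by auto
      have "(x k - t k x) * (Q x - Q (x(k:=0))) \<le> \<bar>x k - t k x\<bar> * \<bar>Q x - Q (x(k:=0))\<bar>"
        by (metis abs_ge_self abs_mult)
      also have "\<dots> \<le> 2 * K" using a1 Rb[OF k x] by (simp add: mult_mono')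
      finally show "(x k - t k x) * (Q x - Q (x(k:=0))) * w x \<le> 2 * K * w x"
        using wpos[of x] by (simp add: mult_right_mono)
    qed
    also have "\<dots> = 2 * K * ising_Z A \<beta> B n"
      unfolding ising_Z_def w_def by (simp add: sum_distrib_left)
    finally show ?thesis .
  qed
  have "(\<Sum>x\<in>?S. (Q x)^2 * w x) = (\<Sum>x\<in>?S. \<Sum>k<n. d k * ((x k - t k x) * Q x * w x))"
    unfolding power2_eq_square by (rule sum.cong[OF refl]) (simp add: Q_def sum_distrib_right mult.assoc)
  also have "\<dots> = (\<Sum>k<n. d k * (\<Sum>x\<in>?S. (x k - t k x) * Q x * w x))"
    by (subst sum.swap) (simp add: sum_distrib_left)
  also have "\<dots> \<le> (\<Sum>k<n. \<gamma> * (2 * K * ising_Z A \<beta> B n))"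
  proof (rule sum_mono)
    fix k assume k: "k \<in> {..<n}"
    have KZ: "0 \<le> 2 * K * ising_Z A \<beta> B n" unfolding K_def using g0 b0 Zpos by simp
    show "d k * (\<Sum>x\<in>?S. (x k - t k x) * Q x * w x) \<le> \<gamma> * (2 * K * ising_Z A \<beta> B n)"
    proof -
      have kk: "k < n" using k by simp
      have "d k * (\<Sum>x\<in>?S. (x k - t k x) * Q x * w x) \<le> d k * (2 * K * ising_Z A \<beta> B n)"
        by (rule mult_left_mono[OF per_k[OF kk] dnn[OF kk]])
      also have "\<dots> \<le> \<gamma> * (2 * K * ising_Z A \<beta> B n)"
        by (rule mult_right_mono[OF dle[OF kk] KZ])
      finally show ?thesis .
    qed
  qed
  finally have main: "(\<Sum>x\<in>?S. (Q x)^2 * w x) \<le> real n * (\<gamma> * (2 * K * ising_Z A \<beta> B n))" by simp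
  show ?thesis
  proof -
    have "(\<Sum>x\<in>?S. (Q x)^2 * w x) / ising_Z A \<beta> B n \<le> real n * (2 * \<gamma> * K)"
      using main Zpos by (simp add: pos_divide_le_eq algebra_simps)
    then show ?thesis unfolding ising_expect_def eqQ w_def K_def by simp
  qed
qed

theorem lemma3:
  fixes A :: "nat \<Rightarrow> nat \<Rightarrow> nat \<Rightarrow> real" and \<beta> B :: real
  assumes sym: "\<And>n i j. i < n \<Longrightarrow> j < n \<Longrightarrow> A n i j = A n j i"
    and nonneg: "\<And>n i j. i < n \<Longrightarrow> j < n \<Longrightarrow> A n i j \<ge> 0"
    and diag: "\<And>n i. i < n \<Longrightarrow> A n i i = 0"
    and C1: "\<exists>\<gamma>::real. \<forall>n i. i < n \<longrightarrow> (\<Sum>j<n. A n i j) \<le> \<gamma>"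
    and C2: "liminf (\<lambda>n. ereal ((1 / real n) * (\<Sum>i<n. \<Sum>j<n. A n i j))) > 0"
    and beta_pos: "\<beta> > 0" and B_ne: "B \<noteq> 0"
  shows "limsup (\<lambda>n. ereal ((1 / real n) *
           ising_expect A \<beta> B n (\<lambda>x. (\<Sum>i<n. local_field A n x i
              - (\<Sum>j<n. A n i j * tanh (\<beta> * local_field A n x j + B))) ^ 2))) < \<infinity>"
proof -
  obtain \<gamma> :: real where g: "\<And>n i. i < n \<Longrightarrow> (\<Sum>j<n. A n i j) \<le> \<gamma>" using C1 by blast
  have g0: "\<gamma> \<ge> 0" using g[of 0 1] diag[of 0 1] by simp
  define C where "C = 2 * \<gamma> * (\<gamma> + \<beta> * \<gamma> * \<gamma>)"
  have C0: "C \<ge> 0" unfolding C_def using g0 beta_pos by simp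
  have bnd: "(1 / real n) * ising_expect A \<beta> B n (\<lambda>x. (\<Sum>i<n. local_field A n x i
              - (\<Sum>j<n. A n i j * tanh (\<beta> * local_field A n x j + B))) ^ 2) \<le> C" for n
  proof (cases "n = 0")
    case True then show ?thesis using C0 by simp
  next
    case False
    define E where "E = ising_expect A \<beta> B n (\<lambda>x. (\<Sum>i<n. local_field A n x i
              - (\<Sum>j<n. A n i j * tanh (\<beta> * local_field A n x j + B))) ^ 2)"
    have "E \<le> real n * C"
      unfolding C_def E_def
      by (rule main_bound[of n A \<gamma> \<beta> B, OF sym nonneg diag g g0 less_imp_le[OF beta_pos]])
    then have "(1 / real n) * E \<le> (1 / real n) * (real n * C)"
      by (rule mult_left_mono) simp
    also have "\<dots> = C" using False by simp
    finally show ?thesis unfolding E_def .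
  qed
  have "limsup (\<lambda>n. ereal ((1 / real n) *
           ising_expect A \<beta> B n (\<lambda>x. (\<Sum>i<n. local_field A n x i
              - (\<Sum>j<n. A n i j * tanh (\<beta> * local_field A n x j + B))) ^ 2))) \<le> ereal C"
    by (rule Limsup_bounded, rule always_eventually, rule allI, subst ereal_less_eq(3), rule bnd)
  moreover have "ereal C < \<infinity>" by simp
  ultimately show ?thesis by (rule le_less_trans)
qed

end
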